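(* Let $G$ be a commutative group, $G'$ a subgroup of $G$, and $U\subset G'$ a finite set. Then $\beta(U,G)=\beta(U,G')$.
   Context: For a finite set $U$ in a commutative group $K$, $\beta(U,K)=\inf_{A,B}\frac{|A+B+U|}{\sqrt{|A||B|}}$, where the infimum is over all nonempty finite $A,B\subset K$ (so the ambient group over which $A,B$ range is indicated). *)

theory Defs
  imports Complex_Main
begin

definition is_subgroup :: "'a::ab_group_add set \<Rightarrow> bool" where
  "is_subgroup H \<longleftrightarrow> 0 \<in> H \<and> (\<forall>x\<in>H. \<forall>y\<in>H. x + y \<in> H) \<and> (\<forall>x\<in>H. - x \<in> H)"

definition sumset3 :: "'a::ab_group_add set \<Rightarrow> 'a set \<Rightarrow> 'a set \<Rightarrow> 'a set" where
  "sumset3 A B U = {a + b + u | a b u. a \<in> A \<and> b \<in> B \<and> u \<in> U}"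

definition beta :: "'a::ab_group_add set \<Rightarrow> 'a set \<Rightarrow> real" where
  "beta U K = Inf {real (card (sumset3 A B U)) / sqrt (real (card A) * real (card B)) | A B.
      A \<subseteq> K \<and> B \<subseteq> K \<and> finite A \<and> finite B \<and> A \<noteq> {} \<and> B \<noteq> {}}"

end

theory Submission
  imports Defs
begin

definition piece :: "'a::ab_group_add set \<Rightarrow> 'a set \<Rightarrow> 'a \<Rightarrow> 'a set" where
  "piece G S x = {s\<in>S. s - x \<in> G}"

lemma sg_add: assumes "is_subgroup G" "x\<in>G" "y\<in>G" shows "x + y \<in> G"
  using assms unfolding is_subgroup_def by blast

lemma sg_neg: assumes "is_subgroup G" "x\<in>G" shows "- x \<in> G"
  using assms unfolding is_subgroup_def by blast

lemma sg_diff: assumes "is_subgroup G" "x\<in>G" "y\<in>G" shows "x - y \<in> G"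
  using sg_add[OF assms(1) assms(2) sg_neg[OF assms(1) assms(3)]] by simp

lemma sg_zero: assumes "is_subgroup G" shows "0 \<in> G"
  using assms unfolding is_subgroup_def by blast

lemma piece_eq: assumes "is_subgroup G" "x - y \<in> G" shows "piece G S x = piece G S y"
proof -
  have "s - x \<in> G \<longleftrightarrow> s - y \<in> G" for s
  proof
    assume "s - x \<in> G" then show "s - y \<in> G" using sg_add[OF assms(1) _ assms(2)] by fastforce
  next
    assume h: "s - y \<in> G"
    have "(s - y) - (x - y) = s - x" by simp
    then show "s - x \<in> G" using sg_diff[OF assms(1) h assms(2)] by simp
  qed
  then show ?thesis unfolding piece_def by blast
qed

lemma piece_self: "is_subgroup G \<Longrightarrow> x \<in> S \<Longrightarrow> x \<in> piece G S x"
  unfolding piece_def using sg_zero by auto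

lemma piece_sub: "piece G S x \<subseteq> S" unfolding piece_def by auto

lemma pieces_disj:
  assumes "is_subgroup G" "z \<in> piece G S y" "z \<in> piece G S y'"
  shows "piece G S y = piece G S y'"
proof -
  have "z - y' \<in> G" "z - y \<in> G" using assms unfolding piece_def by auto
  then have "(z - y') - (z - y) \<in> G" using sg_diff[OF assms(1)] by blast
  then show ?thesis using piece_eq[OF assms(1)] by simp
qed

lemma card_pieces:
  assumes "is_subgroup G" "finite S"
  shows "card S = (\<Sum>Q\<in>piece G S ` S. card Q)"
proof -
  have U: "\<Union>(piece G S ` S) = S"
  proof (intro equalityI subsetI)
    fix z assume "z \<in> \<Union>(piece G S ` S)" then show "z \<in> S" unfolding piece_def by auto
  next
    fix z assume "z \<in> S" then show "z \<in> \<Union>(piece G S ` S)" using piece_self[OF assms(1)] by auto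
  qed
  have "pairwise disjnt (piece G S ` S)"
  proof (rule pairwiseI)
    fix P Q assume "P \<in> piece G S ` S" "Q \<in> piece G S ` S" "P \<noteq> Q"
    then obtain y y' where yy: "P = piece G S y" "Q = piece G S y'" by blast
    show "disjnt P Q"
    proof (rule ccontr)
      assume "\<not> disjnt P Q"
      then obtain z where "z \<in> piece G S y" "z \<in> piece G S y'" using yy unfolding disjnt_def by blast
      then have "piece G S y = piece G S y'" by (rule pieces_disj[OF assms(1)])
      then show False using yy \<open>P \<noteq> Q\<close> by simp
    qed
  qed
  moreover have "\<And>Q. Q \<in> piece G S ` S \<Longrightarrow> finite Q" using assms(2) unfolding piece_def by auto
  ultimately have "card (\<Union>(piece G S ` S)) = sum card (piece G S ` S)" by (rule card_Union_disjoint)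
  then show ?thesis using U by simp
qed

lemma sumset3_image: "sumset3 A B U = (\<lambda>(a,b,u). a+b+u) ` (A \<times> B \<times> U)"
  unfolding sumset3_def by force

lemma finite_sumset3: "finite A \<Longrightarrow> finite B \<Longrightarrow> finite U \<Longrightarrow> finite (sumset3 A B U)"
  unfolding sumset3_image by auto

lemma sumset3_comm: "sumset3 A B U = sumset3 B A U"
  unfolding sumset3_def by (metis add.commute)

lemma sumset3_mono: "A \<subseteq> A' \<Longrightarrow> B \<subseteq> B' \<Longrightarrow> sumset3 A B U \<subseteq> sumset3 A' B' U"
  unfolding sumset3_def by blast

lemma sumset3_shift:
  "sumset3 ((\<lambda>a. a - x) ` A) ((\<lambda>b. b - y) ` B) U = (\<lambda>z. z - (x + y)) ` sumset3 A B U"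
proof -
  have "sumset3 ((\<lambda>a. a - x) ` A) ((\<lambda>b. b - y) ` B) U
      = {a + b + u - (x + y) | a b u. a \<in> A \<and> b \<in> B \<and> u \<in> U}"
  proof (intro equalityI subsetI)
    fix z assume "z \<in> sumset3 ((\<lambda>a. a - x) ` A) ((\<lambda>b. b - y) ` B) U"
    then obtain a b u where "a \<in> A" "b \<in> B" "u \<in> U" "z = (a - x) + (b - y) + u"
      unfolding sumset3_def by blast
    moreover have "(a - x) + (b - y) + u = a + b + u - (x + y)" by (simp add: algebra_simps)
    ultimately show "z \<in> {a + b + u - (x + y) | a b u. a \<in> A \<and> b \<in> B \<and> u \<in> U}" by blast
  next
    fix z assume "z \<in> {a + b + u - (x + y) | a b u. a \<in> A \<and> b \<in> B \<and> u \<in> U}"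
    then obtain a b u where "a \<in> A" "b \<in> B" "u \<in> U" "z = a + b + u - (x + y)" by blast
    moreover have "(a - x) + (b - y) + u = a + b + u - (x + y)" by (simp add: algebra_simps)
    ultimately show "z \<in> sumset3 ((\<lambda>a. a - x) ` A) ((\<lambda>b. b - y) ` B) U"
      unfolding sumset3_def by (intro CollectI exI[of _ "a - x"] exI[of _ "b - y"] exI[of _ u]) auto
  qed
  also have "\<dots> = (\<lambda>z. z - (x + y)) ` sumset3 A B U"
    unfolding sumset3_def by auto
  finally show ?thesis .
qed

definition betaset :: "'a::ab_group_add set \<Rightarrow> 'a set \<Rightarrow> real set" where
  "betaset U K = {real (card (sumset3 A B U)) / sqrt (real (card A) * real (card B)) | A B.
      A \<subseteq> K \<and> B \<subseteq> K \<and> finite A \<and> finite B \<and> A \<noteq> {} \<and> B \<noteq> {}}"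

lemma beta_eq: "beta U K = Inf (betaset U K)"
  unfolding beta_def betaset_def by simp

lemma betaset_nonneg: "r \<in> betaset U K \<Longrightarrow> 0 \<le> r"
  unfolding betaset_def by auto

lemma betaset_bdd: "bdd_below (betaset U K)"
  by (rule bdd_belowI[of _ 0]) (rule betaset_nonneg)

lemma betaset_ne: "0 \<in> K \<Longrightarrow> betaset U K \<noteq> {}"
  unfolding betaset_def by blast

lemma beta_nonneg: "0 \<in> K \<Longrightarrow> 0 \<le> beta U K"
  unfolding beta_eq by (rule cInf_greatest[OF betaset_ne]) (auto intro: betaset_nonneg)

lemma base:
  assumes sg: "is_subgroup G" and "finite U" "U \<subseteq> G" "finite A" "finite B" "A \<noteq> {}" "B \<noteq> {}"
    and hA: "\<forall>a\<in>A. a - x \<in> G" and hB: "\<forall>b\<in>B. b - y \<in> G"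
  shows "beta U G * sqrt (real (card A) * real (card B)) \<le> real (card (sumset3 A B U))"
proof -
  define A' where "A' = (\<lambda>a. a - x) ` A"
  define B' where "B' = (\<lambda>b. b - y) ` B"
  have cA: "card A' = card A" unfolding A'_def by (rule card_image) (simp add: inj_on_def)
  have cB: "card B' = card B" unfolding B'_def by (rule card_image) (simp add: inj_on_def)
  have cS: "card (sumset3 A' B' U) = card (sumset3 A B U)"
    unfolding A'_def B'_def sumset3_shift by (rule card_image) (simp add: inj_on_def)
  have "real (card (sumset3 A' B' U)) / sqrt (real (card A') * real (card B')) \<in> betaset U G"
    unfolding betaset_def using assms A'_def B'_def by blast
  then have "beta U G \<le> real (card (sumset3 A B U)) / sqrt (real (card A) * real (card B))"
    unfolding beta_eq using cA cB cS cInf_lower[OF _ betaset_bdd] by metis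
  moreover have "0 < sqrt (real (card A) * real (card B))"
    using assms by (simp add: card_gt_0_iff)
  ultimately show ?thesis by (simp add: pos_le_divide_eq)
qed

lemma half:
  assumes sg: "is_subgroup G" and "finite U" "U \<subseteq> G" "finite A" "finite B" "x0 \<in> A"
  shows "beta U G * sqrt (real (card (piece G A x0))) * (\<Sum>Q\<in>piece G B ` B. sqrt (real (card Q)))
     \<le> real (card (sumset3 A B U))"
proof -
  define P0 where "P0 = piece G A x0"
  define F where "F = (\<lambda>Q. sumset3 P0 Q U)"
  have P0: "finite P0" "P0 \<noteq> {}" "\<forall>a\<in>P0. a - x0 \<in> G"
    using assms piece_self[OF sg] piece_sub finite_subset unfolding P0_def
    by (auto simp: piece_def)
  have fin: "finite (piece G B ` B)" using assms by simp
  have step: "beta U G * sqrt (real (card P0)) * sqrt (real (card Q)) \<le> real (card (F Q))"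
    if hQ: "Q \<in> piece G B ` B" for Q
  proof -
    obtain y where y: "y \<in> B" "Q = piece G B y" using hQ by blast
    have "finite Q" "Q \<noteq> {}" "\<forall>b\<in>Q. b - y \<in> G"
      using y assms piece_self[OF sg] piece_sub finite_subset by (auto simp: piece_def)
    from base[OF sg assms(2,3) P0(1) this(1) P0(2) this(2) P0(3) this(3)]
    show ?thesis unfolding F_def by (simp add: real_sqrt_mult mult.assoc)
  qed
  have disj: "F Q \<inter> F Q' = {}" if hQ: "Q \<in> piece G B ` B" "Q' \<in> piece G B ` B" "Q \<noteq> Q'" for Q Q'
  proof (rule ccontr)
    assume "F Q \<inter> F Q' \<noteq> {}"
    then obtain a q u a' q' u' where w: "a \<in> P0" "q \<in> Q" "u \<in> U" "a' \<in> P0" "q' \<in> Q'" "u' \<in> U"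
      "a + q + u = a' + q' + u'" unfolding F_def sumset3_def by blast
    obtain y where y: "y \<in> B" "Q = piece G B y" using hQ by blast
    obtain y' where y': "y' \<in> B" "Q' = piece G B y'" using hQ by blast
    have m: "a - x0 \<in> G" "a' - x0 \<in> G" "u \<in> G" "u' \<in> G" "q - y \<in> G" "q' - y' \<in> G"
      using w P0 y y' assms(3) by (auto simp: piece_def)
    have eq: "y - y' = ((((a' - x0) - (a - x0)) + (u' - u)) - (q - y)) + (q' - y')"
    proof -
      have "a' - a + u' - u = q - q'" using w(7) by (simp add: algebra_simps)
      then show ?thesis by (simp add: algebra_simps)
    qed
    have "y - y' \<in> G" unfolding eq
      by (intro sg_add[OF sg] sg_diff[OF sg] m)
    then have "Q = Q'" using y y' piece_eq[OF sg] by simp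
    then show False using hQ by simp
  qed
  have "(\<Sum>Q\<in>piece G B ` B. beta U G * sqrt (real (card P0)) * sqrt (real (card Q)))
      \<le> (\<Sum>Q\<in>piece G B ` B. real (card (F Q)))"
    by (rule sum_mono) (rule step)
  also have "\<dots> = real (\<Sum>Q\<in>piece G B ` B. card (F Q))" by simp
  also have "(\<Sum>Q\<in>piece G B ` B. card (F Q)) = card (\<Union>(F ` piece G B ` B))"
    by (rule card_UN_disjoint[symmetric]) (use fin disj in \<open>auto simp: F_def intro!: finite_sumset3 P0 assms finite_subset[OF piece_sub]\<close>)
  also have "card (\<Union>(F ` piece G B ` B)) \<le> card (sumset3 A B U)"
    apply (rule card_mono)
     apply (simp add: finite_sumset3 assms)
    unfolding F_def P0_def using sumset3_mono[OF piece_sub piece_sub] by blast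
  finally show ?thesis unfolding P0_def by (simp add: sum_distrib_left)
qed

lemma exmax:
  fixes f :: "'b \<Rightarrow> nat"
  assumes "finite A" "A \<noteq> {}" shows "\<exists>x0\<in>A. \<forall>x\<in>A. f x \<le> f x0"
proof -
  have "Max (f ` A) \<in> f ` A" using assms by simp
  then obtain x0 where "x0 \<in> A" "f x0 = Max (f ` A)" by force
  then show ?thesis using assms by (metis Max_ge finite_imageI imageI)
qed

lemma sum_sqrt_bound:
  assumes sg: "is_subgroup G" and "finite A" "x0 \<in> A"
    and mx: "\<forall>x\<in>A. card (piece G A x) \<le> card (piece G A x0)"
  shows "real (card A) \<le> sqrt (real (card (piece G A x0))) * (\<Sum>R\<in>piece G A ` A. sqrt (real (card R)))"
proof -
  have "real (card A) = (\<Sum>R\<in>piece G A ` A. real (card R))"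
    using card_pieces[OF sg assms(2)] by simp
  also have "\<dots> = (\<Sum>R\<in>piece G A ` A. sqrt (real (card R)) * sqrt (real (card R)))"
    by simp
  also have "\<dots> \<le> (\<Sum>R\<in>piece G A ` A. sqrt (real (card (piece G A x0))) * sqrt (real (card R)))"
  proof (rule sum_mono)
    fix R assume "R \<in> piece G A ` A"
    then have "card R \<le> card (piece G A x0)" using mx by blast
    then show "sqrt (real (card R)) * sqrt (real (card R)) \<le> sqrt (real (card (piece G A x0))) * sqrt (real (card R))"
      by (intro mult_right_mono) auto
  qed
  finally show ?thesis by (simp add: sum_distrib_left)
qed

lemma main:
  assumes sg: "is_subgroup G" and "finite U" "U \<subseteq> G" "finite A" "finite B" "A \<noteq> {}" "B \<noteq> {}"
  shows "beta U G * sqrt (real (card A) * real (card B)) \<le> real (card (sumset3 A B U))"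
proof -
  define b where "b = beta U G"
  have b0: "0 \<le> b" unfolding b_def using beta_nonneg sg_zero[OF sg] by blast
  obtain x0 where x0: "x0 \<in> A" "\<forall>x\<in>A. card (piece G A x) \<le> card (piece G A x0)"
    using exmax[OF assms(4,6), of "\<lambda>x. card (piece G A x)"] by blast
  obtain y0 where y0: "y0 \<in> B" "\<forall>x\<in>B. card (piece G B x) \<le> card (piece G B y0)"
    using exmax[OF assms(5,7), of "\<lambda>x. card (piece G B x)"] by blast
  define SA where "SA = (\<Sum>R\<in>piece G A ` A. sqrt (real (card R)))"
  define SB where "SB = (\<Sum>R\<in>piece G B ` B. sqrt (real (card R)))"
  define \<alpha> where "\<alpha> = sqrt (real (card (piece G A x0)))"
  define \<beta> where "\<beta> = sqrt (real (card (piece G B y0)))"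
  define N where "N = real (card (sumset3 A B U))"
  have h1: "b * \<alpha> * SB \<le> N"
    using half[OF sg assms(2,3,4,5) x0(1)] unfolding b_def \<alpha>_def SB_def N_def .
  have h2: "b * \<beta> * SA \<le> N"
    using half[OF sg assms(2,3,5,4) y0(1)] unfolding b_def \<beta>_def SA_def N_def sumset3_comm[of B A] .
  have h3: "real (card A) \<le> \<alpha> * SA" unfolding \<alpha>_def SA_def by (rule sum_sqrt_bound[OF sg assms(4) x0])
  have h4: "real (card B) \<le> \<beta> * SB" unfolding \<beta>_def SB_def by (rule sum_sqrt_bound[OF sg assms(5) y0])
  have nn: "0 \<le> \<alpha>" "0 \<le> \<beta>" "0 \<le> SA" "0 \<le> SB" unfolding \<alpha>_def \<beta>_def SA_def SB_def
    by (auto intro: sum_nonneg)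
  have "(b * sqrt (real (card A) * real (card B)))\<^sup>2 = b\<^sup>2 * (real (card A) * real (card B))"
    by (simp add: power_mult_distrib)
  also have "\<dots> \<le> b\<^sup>2 * ((\<alpha> * SA) * (\<beta> * SB))"
    by (intro mult_left_mono mult_mono h3 h4) (use nn in auto)
  also have "\<dots> = (b * \<alpha> * SB) * (b * \<beta> * SA)" by (simp add: power2_eq_square algebra_simps)
  also have "\<dots> \<le> N * N"
    by (intro mult_mono h1 h2) (use nn b0 h1 in \<open>auto simp: N_def\<close>)
  finally have "(b * sqrt (real (card A) * real (card B)))\<^sup>2 \<le> N\<^sup>2" by (simp add: power2_eq_square)
  then have "b * sqrt (real (card A) * real (card B)) \<le> N"
    by (rule power2_le_imp_le) (simp add: N_def)
  then show ?thesis unfolding b_def N_def .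
qed

theorem mainTheorem5:
  fixes G' :: "'a::ab_group_add set" and U :: "'a set"
  assumes "is_subgroup G'" and "finite U" and "U \<subseteq> G'"
  shows "beta U (UNIV :: 'a set) = beta U G'"
proof (rule antisym)
  have z: "0 \<in> G'" using sg_zero[OF assms(1)] .
  show "beta U UNIV \<le> beta U G'"
    unfolding beta_eq
    by (rule cInf_superset_mono[OF betaset_ne[OF z] betaset_bdd]) (auto simp: betaset_def)
  show "beta U G' \<le> beta U UNIV"
    unfolding beta_eq[of U UNIV]
  proof (rule cInf_greatest[OF betaset_ne])
    fix r assume "r \<in> betaset U (UNIV :: 'a set)"
    then obtain A B where AB: "r = real (card (sumset3 A B U)) / sqrt (real (card A) * real (card B))"
      "finite A" "finite B" "A \<noteq> {}" "B \<noteq> {}" unfolding betaset_def by blast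
    have "0 < sqrt (real (card A) * real (card B))" using AB by (simp add: card_gt_0_iff)
    then show "beta U G' \<le> r" unfolding AB(1)
      using main[OF assms AB(2-5)] by (simp add: pos_le_divide_eq)
  qed simp
qed

end
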